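(* Let $1\le p<2$, $f\in\mathcal H_0$, $u$ the solution of $\partial_tu+\partial J(u)\ni0$, $u(0)=f$, with extinction time $T_{\mathrm{ex}}$, $\lambda:=1/((2-p)T_{\mathrm{ex}})$, $a(t)=(1-(2-p)\lambda t)^{\frac1{2-p}}$ and $w(t):=u(t)/a(t)$ for $0\le t<T_{\mathrm{ex}}$. Then $t\mapsto\|w(t)\|$ is non-increasing.
   Context: $\mathcal H$ is a real Hilbert space with inner product $\langle\cdot,\cdot\rangle$ and norm $\|\cdot\|$. $J:\mathcal H\to\mathbb R\cup\{\infty\}$ is convex, lower semicontinuous, proper, with dense effective domain, and absolutely $p$-homogeneous: $J(cu)=|c|^pJ(u)$ for $c\ne0$, $J(0)=0$. Standing coercivity assumption: $\lambda_1:=\inf_{u\in\mathcal H_0}pJ(u)/\|u\|^p>0$. $\partial J(u)=\{\zeta: J(u)+\langle\zeta,v-u\rangle\le J(v)\ \forall v\}$; $\mathcal N(J)=\{u:J(u)=0\}$; $\mathcal H_0:=\mathcal N(J)^\perp\setminus\{0\}$. The gradient flow solution (Brezis) is the unique continuous $u:[0,\infty)\to\mathcal H$, Lipschitz on $[\delta,\infty)$ for all $\delta>0$, right-differentiable on $(0,\infty)$ with $u(0)=f$ and $\partial_t^+u(t)=-\zeta(t)$, $\zeta(t)$ the minimal-norm element of $\partial J(u(t))$. $T_{\mathrm{ex}}:=\inf\{T>0:u(t)=0\ \forall t\ge T\}$ (finite for $p<2$). *)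

theory Defs
  imports "HOL-Analysis.Analysis"
begin

text \<open>Functionals J : H -> R \<union> {\<infinity>} are modelled as ereal-valued maps that never take the value minus infinity.\<close>

definition proper_fun :: "('a \<Rightarrow> ereal) \<Rightarrow> bool" where
  "proper_fun J \<longleftrightarrow> (\<forall>u. J u \<noteq> -\<infinity>) \<and> (\<exists>u. J u \<noteq> \<infinity>)"

definition convex_fun :: "('a::real_vector \<Rightarrow> ereal) \<Rightarrow> bool" where
  "convex_fun J \<longleftrightarrow> (\<forall>x y t. 0 \<le> t \<and> t \<le> 1 \<longrightarrow>
      J ((1 - t) *\<^sub>R x + t *\<^sub>R y) \<le> ereal (1 - t) * J x + ereal t * J y)"

definition lsc_fun :: "('a::topological_space \<Rightarrow> ereal) \<Rightarrow> bool" where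
  "lsc_fun J \<longleftrightarrow> (\<forall>c. closed {u. J u \<le> c})"

definition dense_domain :: "('a::topological_space \<Rightarrow> ereal) \<Rightarrow> bool" where
  "dense_domain J \<longleftrightarrow> closure {u. J u < \<infinity>} = UNIV"

definition abs_homogeneous :: "real \<Rightarrow> ('a::real_vector \<Rightarrow> ereal) \<Rightarrow> bool" where
  "abs_homogeneous p J \<longleftrightarrow> J 0 = 0 \<and>
     (\<forall>c u. c \<noteq> 0 \<longrightarrow> J (c *\<^sub>R u) = ereal (\<bar>c\<bar> powr p) * J u)"

definition nullspace :: "('a \<Rightarrow> ereal) \<Rightarrow> 'a set" where
  "nullspace J = {u. J u = 0}"

definition H0 :: "('a::real_inner \<Rightarrow> ereal) \<Rightarrow> 'a set" where
  "H0 J = {u. (\<forall>v\<in>nullspace J. inner u v = 0)} - {0}"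

definition lambda1 :: "real \<Rightarrow> ('a::real_inner \<Rightarrow> ereal) \<Rightarrow> ereal" where
  "lambda1 p J = (INF u\<in>H0 J. ereal p * J u / ereal (norm u powr p))"

definition subdiff :: "('a::real_inner \<Rightarrow> ereal) \<Rightarrow> 'a \<Rightarrow> 'a set" where
  "subdiff J u = {z. \<forall>v. J u + ereal (inner z (v - u)) \<le> J v}"

definition min_norm_elem :: "'a::real_normed_vector set \<Rightarrow> 'a \<Rightarrow> bool" where
  "min_norm_elem S z \<longleftrightarrow> z \<in> S \<and> (\<forall>y\<in>S. norm z \<le> norm y)"

text \<open>Brezis gradient flow solution of  u' + \<partial>J(u) \<ni> 0, u(0) = f.\<close>
definition gradient_flow :: "('a::real_inner \<Rightarrow> ereal) \<Rightarrow> 'a \<Rightarrow> (real \<Rightarrow> 'a) \<Rightarrow> bool" where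
  "gradient_flow J f u \<longleftrightarrow>
     continuous_on {0..} u \<and> u 0 = f \<and>
     (\<forall>\<delta>>0. \<exists>L. L\<ge>0 \<and> L-lipschitz_on {\<delta>..} u) \<and>
     (\<forall>t>0. \<exists>z. min_norm_elem (subdiff J (u t)) z \<and>
              (u has_vector_derivative (- z)) (at t within {t..}))"

definition extinction_time :: "(real \<Rightarrow> 'a::zero) \<Rightarrow> real" where
  "extinction_time u = Inf {T. T > 0 \<and> (\<forall>t\<ge>T. u t = 0)}"

end

theory Submission
  imports Defs
begin

lemma dini_main:
  fixes \<phi> :: "real \<Rightarrow> real"
  assumes ab: "a \<le> b"
    and lsc: "\<And>t e. t \<in> {a<..b} \<Longrightarrow> e > 0 \<Longrightarrow> eventually (\<lambda>s. \<phi> t < \<phi> s + e) (at_left t)"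
    and rb: "\<And>t e. t \<in> {a..<b} \<Longrightarrow> e > 0 \<Longrightarrow> eventually (\<lambda>s. \<phi> s \<le> \<phi> t + e * (s - t)) (at_right t)"
  shows "\<phi> b \<le> \<phi> a"
proof -
  have main: "\<phi> b \<le> \<phi> a + \<epsilon> * (b - a)" if \<epsilon>: "\<epsilon> > 0" for \<epsilon>
  proof -
    define S where "S = {t\<in>{a..b}. \<phi> t \<le> \<phi> a + \<epsilon> * (t - a)}"
    define c where "c = Sup S"
    have aS: "a \<in> S" using ab by (simp add: S_def)
    have bdd: "bdd_above S" unfolding S_def by (rule bdd_aboveI[of _ b]) auto
    have ac: "a \<le> c" unfolding c_def using aS bdd by (rule cSup_upper)
    have cb: "c \<le> b" unfolding c_def using aS by (intro cSup_least) (auto simp: S_def)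
    have cS: "c \<in> S"
    proof (rule ccontr)
      assume ncS: "c \<notin> S"
      hence "c \<noteq> a" using aS by auto
      hence ac': "a < c" using ac by auto
      hence "\<phi> c > \<phi> a + \<epsilon> * (c - a)" using ncS cb by (auto simp: S_def)
      define d where "d = \<phi> c - \<phi> a - \<epsilon> * (c - a)"
      have d: "d > 0" using \<open>\<phi> c > _\<close> by (simp add: d_def)
      have "eventually (\<lambda>s. \<phi> c < \<phi> s + d) (at_left c)" using lsc[of c d] ac' cb d by auto
      then obtain l where l: "l < c" and lP: "\<And>y. l < y \<Longrightarrow> y < c \<Longrightarrow> \<phi> c < \<phi> y + d"
        unfolding eventually_at_left_field by auto
      have "max l a < Sup S" using l ac' by (simp add: c_def[symmetric])
      hence "\<exists>s\<in>S. max l a < s" using aS by (subst (asm) less_cSup_iff[OF _ bdd]) auto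
      then obtain s where sS: "s \<in> S" and ls: "max l a < s" by blast
      have "s \<le> c" unfolding c_def using sS bdd by (rule cSup_upper)
      hence sc: "s < c" using sS ncS by (cases "s = c") auto
      have "\<phi> s \<le> \<phi> a + \<epsilon> * (s - a)" using sS by (simp add: S_def)
      also have "\<dots> \<le> \<phi> a + \<epsilon> * (c - a)" using sc \<epsilon> by (intro add_left_mono mult_left_mono) auto
      finally have "\<phi> s + d \<le> \<phi> c" by (simp add: d_def)
      with lP[of s] ls sc show False by auto
    qed
    have "c = b"
    proof (rule ccontr)
      assume "c \<noteq> b"
      hence cb': "c < b" using cb by auto
      have "eventually (\<lambda>s. \<phi> s \<le> \<phi> c + \<epsilon> * (s - c)) (at_right c)" using rb[of c \<epsilon>] ac cb' \<epsilon> by auto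
      then obtain r where r: "r > c" and rP: "\<And>y. c < y \<Longrightarrow> y < r \<Longrightarrow> \<phi> y \<le> \<phi> c + \<epsilon> * (y - c)"
        unfolding eventually_at_right_field by auto
      define s where "s = (c + min r b) / 2"
      have s1: "c < s" "s < r" "s \<le> b" using r cb' by (auto simp: s_def)
      have "\<phi> s \<le> \<phi> c + \<epsilon> * (s - c)" using rP s1 by auto
      also have "\<dots> \<le> \<phi> a + \<epsilon> * (c - a) + \<epsilon> * (s - c)" using cS by (simp add: S_def)
      finally have "s \<in> S" using s1 ac by (simp add: S_def algebra_simps)
      hence "s \<le> c" unfolding c_def using bdd by (rule cSup_upper)
      thus False using s1 by auto
    qed
    thus ?thesis using cS by (simp add: S_def)
  qed
  show ?thesis
  proof (cases "a = b")
    case True thus ?thesis by simp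
  next
    case False
    hence ab': "a < b" using ab by auto
    show ?thesis
    proof (rule ccontr)
      assume nt: "\<not> ?thesis"
      define \<epsilon> where "\<epsilon> = (\<phi> b - \<phi> a) / (2 * (b - a))"
      have "\<epsilon> > 0" using nt ab' by (simp add: \<epsilon>_def)
      have "\<epsilon> * (b - a) = (\<phi> b - \<phi> a) / 2" using ab' by (simp add: \<epsilon>_def field_simps)
      with main[OF \<open>\<epsilon> > 0\<close>] have "\<phi> b \<le> \<phi> a + (\<phi> b - \<phi> a) / 2" by simp
      thus False using nt by (simp add: field_simps)
    qed
  qed
qed

locale hfun =
  fixes J :: "'a::{real_inner,complete_space} \<Rightarrow> ereal" and p :: real
  assumes conv: "convex_fun J" and prp: "proper_fun J" and hom: "abs_homogeneous p J"
    and p1: "1 \<le> p" and p2: "p < 2"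
begin

definition Jr :: "'a \<Rightarrow> real" where "Jr x = real_of_ereal (J x)"

lemma J_ninf: "J x \<noteq> -\<infinity>"
  using prp by (auto simp: proper_fun_def)

lemma J_real: "J v \<noteq> \<infinity> \<Longrightarrow> J v = ereal (Jr v)"
  using J_ninf[of v] by (cases "J v") (auto simp: Jr_def)

lemma J_hom: "c \<noteq> 0 \<Longrightarrow> J (c *\<^sub>R x) = ereal (\<bar>c\<bar> powr p) * J x"
  using hom unfolding abs_homogeneous_def by blast

lemma J_zero: "J 0 = 0"
  using hom unfolding abs_homogeneous_def by (rule conjunct1)

lemma conv_ineq: "0 \<le> t \<Longrightarrow> t \<le> 1 \<Longrightarrow> J ((1 - t) *\<^sub>R x + t *\<^sub>R y) \<le> ereal (1 - t) * J x + ereal t * J y"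
  using conv unfolding convex_fun_def by blast

lemma J_nonneg: "0 \<le> J x"
proof -
  have "J ((1 - 1/2) *\<^sub>R x + (1/2) *\<^sub>R (-x)) \<le> ereal (1 - 1/2) * J x + ereal (1/2) * J (-x)"
    by (rule conv_ineq) auto
  moreover have "J (-x) = J x" using J_hom[of "-1" x] by simp
  moreover have "(1 - 1/2) *\<^sub>R x + (1/2) *\<^sub>R (-x) = (0::'a)" by (simp add: algebra_simps)
  ultimately have "0 \<le> ereal (1/2) * J x + ereal (1/2) * J x" using J_zero by simp
  thus ?thesis using J_ninf[of x] by (cases "J x") auto
qed

lemma Jr_nonneg: "0 \<le> Jr x"
  using J_nonneg[of x] by (cases "J x") (auto simp: Jr_def)

lemma J_fin_hom: "J x \<noteq> \<infinity> \<Longrightarrow> J (c *\<^sub>R x) \<noteq> \<infinity>"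
  using J_hom[of c x] J_real[of x] J_zero by (cases "c = 0") auto

lemma Jr_hom: "c \<noteq> 0 \<Longrightarrow> Jr (c *\<^sub>R x) = \<bar>c\<bar> powr p * Jr x"
proof -
  assume c: "c \<noteq> 0"
  have pos: "\<bar>c\<bar> powr p > 0" using c by simp
  show ?thesis
  proof (cases "J x")
    case (real r)
    thus ?thesis using J_hom[OF c, of x] by (simp add: Jr_def)
  next
    case PInf
    hence "J (c *\<^sub>R x) = \<infinity>" using J_hom[OF c, of x] pos by simp
    thus ?thesis using PInf by (simp add: Jr_def)
  next
    case MInf
    thus ?thesis using J_ninf[of x] by simp
  qed
qed

lemma subdiff_fin: "\<xi> \<in> subdiff J x \<Longrightarrow> J x \<noteq> \<infinity>"
proof -
  assume "\<xi> \<in> subdiff J x"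
  obtain v where v: "J v \<noteq> \<infinity>" using prp by (auto simp: proper_fun_def)
  have "J x + ereal (inner \<xi> (v - x)) \<le> J v" using \<open>\<xi> \<in> _\<close> by (auto simp: subdiff_def)
  thus ?thesis using v by auto
qed

lemma subgrad: "\<xi> \<in> subdiff J x \<Longrightarrow> J v \<noteq> \<infinity> \<Longrightarrow> Jr x + inner \<xi> (v - x) \<le> Jr v"
proof -
  assume a: "\<xi> \<in> subdiff J x" "J v \<noteq> \<infinity>"
  have "J x + ereal (inner \<xi> (v - x)) \<le> J v" using a by (auto simp: subdiff_def)
  thus ?thesis using J_real[OF subdiff_fin[OF a(1)]] J_real[OF a(2)] by simp
qed

lemma subdiffI:
  assumes "J x \<noteq> \<infinity>" "\<And>v. J v \<noteq> \<infinity> \<Longrightarrow> Jr x + inner \<xi> (v - x) \<le> Jr v"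
  shows "\<xi> \<in> subdiff J x"
  unfolding subdiff_def
proof safe
  fix v
  show "J x + ereal (inner \<xi> (v - x)) \<le> J v"
  proof (cases "J v = \<infinity>")
    case True thus ?thesis by simp
  next
    case False thus ?thesis using assms(2)[OF False] J_real[OF False] J_real[OF assms(1)] by simp
  qed
qed

lemma subdiff_mono:
  assumes "\<xi>1 \<in> subdiff J x1" "\<xi>2 \<in> subdiff J x2"
  shows "0 \<le> inner (\<xi>1 - \<xi>2) (x1 - x2)"
proof -
  have "Jr x1 + inner \<xi>1 (x2 - x1) \<le> Jr x2" by (rule subgrad[OF assms(1) subdiff_fin[OF assms(2)]])
  moreover have "Jr x2 + inner \<xi>2 (x1 - x2) \<le> Jr x1" by (rule subgrad[OF assms(2) subdiff_fin[OF assms(1)]])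
  ultimately show ?thesis by (simp add: inner_diff_left inner_diff_right algebra_simps)
qed

lemma euler:
  assumes "\<xi> \<in> subdiff J x"
  shows "inner \<xi> x = p * Jr x"
proof -
  have fin: "J x \<noteq> \<infinity>" using subdiff_fin[OF assms] .
  define k where "k = (\<lambda>c::real. c powr p * Jr x - Jr x - (c - 1) * inner \<xi> x)"
  have kpos: "k 1 \<le> k c" if "\<bar>1 - c\<bar> < 1" for c
  proof -
    have c: "c > 0" using that by auto
    have "Jr x + inner \<xi> (c *\<^sub>R x - x) \<le> Jr (c *\<^sub>R x)"
      by (rule subgrad[OF assms J_fin_hom[OF fin]])
    also have "\<dots> = c powr p * Jr x" using Jr_hom[of c x] c by simp
    finally show ?thesis using c by (simp add: k_def inner_diff_right algebra_simps)
  qed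
  have "(k has_real_derivative (p * 1 powr (p - 1) * Jr x - 0 - (1 * inner \<xi> x))) (at 1)"
    unfolding k_def by (auto intro!: derivative_eq_intros)
  from DERIV_local_min[OF this _ ] kpos have "p * 1 powr (p - 1) * Jr x - 0 - (1 * inner \<xi> x) = 0"
    by (metis zero_less_one)
  thus ?thesis by simp
qed

lemma subdiff_scale:
  assumes "\<xi> \<in> subdiff J x" "c > 0"
  shows "(c powr (p - 1)) *\<^sub>R \<xi> \<in> subdiff J (c *\<^sub>R x)"
proof (rule subdiffI)
  have fin: "J x \<noteq> \<infinity>" using subdiff_fin[OF assms(1)] .
  show "J (c *\<^sub>R x) \<noteq> \<infinity>" using J_fin_hom[OF fin] .
  fix v assume v: "J v \<noteq> \<infinity>"
  have v': "J ((1/c) *\<^sub>R v) \<noteq> \<infinity>" using J_fin_hom[OF v] .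
  have "Jr x + inner \<xi> ((1/c) *\<^sub>R v - x) \<le> Jr ((1/c) *\<^sub>R v)" by (rule subgrad[OF assms(1) v'])
  hence "c powr p * (Jr x + inner \<xi> ((1/c) *\<^sub>R v - x)) \<le> c powr p * Jr ((1/c) *\<^sub>R v)"
    by (rule mult_left_mono) simp
  also have "c powr p * Jr ((1/c) *\<^sub>R v) = Jr v"
    using Jr_hom[of "1/c" v] assms(2) by (simp add: powr_divide)
  also have "c powr p * (Jr x + inner \<xi> ((1/c) *\<^sub>R v - x)) = Jr (c *\<^sub>R x) + inner ((c powr (p - 1)) *\<^sub>R \<xi>) (v - c *\<^sub>R x)"
  proof -
    have "inner \<xi> ((1/c) *\<^sub>R v - x) = (1/c) * inner \<xi> (v - c *\<^sub>R x)"
      using assms(2) by (simp add: inner_diff_right field_simps)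
    moreover have e1: "c powr (p - 1) = c powr p / c" using assms(2) by (simp add: powr_diff)
    ultimately show ?thesis using Jr_hom[of c x] assms(2) unfolding e1 by (simp add: field_simps inner_diff_right)
  qed
  finally show "Jr (c *\<^sub>R x) + inner ((c powr (p - 1)) *\<^sub>R \<xi>) (v - c *\<^sub>R x) \<le> Jr v" .
qed

lemma null_orth:
  assumes "\<xi> \<in> subdiff J x" "n \<in> nullspace J"
  shows "inner \<xi> n = 0"
proof (rule ccontr)
  assume ne: "inner \<xi> n \<noteq> 0"
  have Jn: "J n = 0" using assms(2) by (simp add: nullspace_def)
  have key: "Jr x + inner \<xi> (c *\<^sub>R n - x) \<le> 0" for c
  proof -
    have "J (c *\<^sub>R n) = 0"
    proof (cases "c = 0")
      case True thus ?thesis using J_zero by simp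
    next
      case False thus ?thesis using J_hom[OF False, of n] Jn by simp
    qed
    hence "J (c *\<^sub>R n) \<noteq> \<infinity>" by simp
    moreover have "Jr (c *\<^sub>R n) = 0" using \<open>J (c *\<^sub>R n) = 0\<close> by (simp add: Jr_def)
    ultimately show ?thesis using subgrad[OF assms(1), of "c *\<^sub>R n"] by simp
  qed
  define K where "K = \<bar>Jr x - inner \<xi> x\<bar> + 1"
  have "Jr x + inner \<xi> ((K / inner \<xi> n) *\<^sub>R n - x) \<le> 0" by (rule key)
  moreover have "inner \<xi> ((K / inner \<xi> n) *\<^sub>R n - x) = K - inner \<xi> x" using ne by (simp add: inner_diff_right)
  ultimately have "Jr x + K - inner \<xi> x \<le> 0" by simp
  moreover have "Jr x - inner \<xi> x \<le> \<bar>Jr x - inner \<xi> x\<bar>" by (rule abs_ge_self)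
  ultimately show False unfolding K_def by linarith
qed

end

lemma parallelogram_mid:
  fixes a b :: "'a::real_inner"
  shows "norm (a - b) ^ 2 = 2 * norm a ^ 2 + 2 * norm b ^ 2 - 4 * norm ((1/2) *\<^sub>R (a + b)) ^ 2"
  by (simp add: power2_norm_eq_inner inner_diff_left inner_diff_right inner_add_left inner_add_right
      inner_commute algebra_simps)

context hfun begin

definition Ceps :: "'a \<Rightarrow> real \<Rightarrow> 'a set" where
  "Ceps x e = {\<xi>. \<forall>v. J v \<noteq> \<infinity> \<longrightarrow> Jr x + inner \<xi> (v - x) \<le> Jr v + e}"

lemma Ceps_mono: "e \<le> e' \<Longrightarrow> Ceps x e \<subseteq> Ceps x e'"
  unfolding Ceps_def by force

lemma Ceps_mid:
  assumes "\<xi>1 \<in> Ceps x e" "\<xi>2 \<in> Ceps x e"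
  shows "(1/2) *\<^sub>R (\<xi>1 + \<xi>2) \<in> Ceps x e"
  unfolding Ceps_def
proof safe
  fix v assume v: "J v \<noteq> \<infinity>"
  have "Jr x + inner \<xi>1 (v - x) \<le> Jr v + e" "Jr x + inner \<xi>2 (v - x) \<le> Jr v + e"
    using assms v by (auto simp: Ceps_def)
  thus "Jr x + inner ((1/2) *\<^sub>R (\<xi>1 + \<xi>2)) (v - x) \<le> Jr v + e"
    by (simp add: inner_add_left field_simps)
qed

lemma subdiff_Ceps: "\<xi> \<in> subdiff J x \<Longrightarrow> 0 \<le> e \<Longrightarrow> \<xi> \<in> Ceps x e"
  unfolding Ceps_def using subgrad by force

lemma Ceps_subdiff:
  assumes fin: "J x \<noteq> \<infinity>" and H: "\<And>e. e > 0 \<Longrightarrow> \<xi> \<in> Ceps x e"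
  shows "\<xi> \<in> subdiff J x"
proof (rule subdiffI[OF fin])
  fix v assume v: "J v \<noteq> \<infinity>"
  have "Jr x + inner \<xi> (v - x) \<le> Jr v + e" if "e > 0" for e
    using H[OF that] v by (auto simp: Ceps_def)
  thus "Jr x + inner \<xi> (v - x) \<le> Jr v"
    by (metis field_le_epsilon)
qed

lemma Ceps_norm_lb:
  assumes a: "min_norm_elem (subdiff J x) a" and \<eta>: "\<eta> > 0"
  shows "\<exists>e>0. \<forall>m\<in>Ceps x e. norm a ^ 2 - \<eta> \<le> norm m ^ 2"
proof (rule ccontr)
  assume "\<not> ?thesis"
  hence H: "\<And>e. e > 0 \<Longrightarrow> \<exists>m\<in>Ceps x e. norm m ^ 2 < norm a ^ 2 - \<eta>" by (auto simp: not_le)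
  have aS: "a \<in> subdiff J x" using a by (simp add: min_norm_elem_def)
  have fin: "J x \<noteq> \<infinity>" using subdiff_fin[OF aS] .
  have aC: "a \<in> Ceps x e" if "e \<ge> 0" for e using subdiff_Ceps[OF aS that] .
  define E where "E n = 1 / (real n + 1)" for n :: nat
  have Epos: "E n > 0" for n by (simp add: E_def)
  have Eanti: "E k \<le> E n" if "n \<le> k" for n k using that by (simp add: E_def frac_le)
  have Elim: "E \<longlonglongrightarrow> 0" unfolding E_def using LIMSEQ_inverse_real_of_nat_add[of 0] 
    by (simp add: inverse_eq_divide add.commute)
  define N where "N n = (\<lambda>m. norm m ^ 2) ` Ceps x (E n)" for n
  define \<mu> where "\<mu> n = Inf (N n)" for n
  have Nne: "N n \<noteq> {}" for n using aC[of "E n"] Epos[of n] by (auto simp: N_def)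
  have Nbdd: "bdd_below (N n)" for n by (rule bdd_belowI[of _ 0]) (auto simp: N_def)
  have \<mu>_le: "\<mu> n \<le> norm m ^ 2" if "m \<in> Ceps x (E n)" for n m
    unfolding \<mu>_def by (rule cInf_lower[OF _ Nbdd]) (use that in \<open>auto simp: N_def\<close>)
  have \<mu>_lt: "\<mu> n < norm a ^ 2 - \<eta>" for n
  proof -
    obtain m where "m \<in> Ceps x (E n)" "norm m ^ 2 < norm a ^ 2 - \<eta>" using H[OF Epos[of n]] by blast
    thus ?thesis using \<mu>_le[of m n] by linarith
  qed
  have inc: "incseq \<mu>"
  proof (rule incseq_SucI)
    fix n
    have "Ceps x (E (Suc n)) \<subseteq> Ceps x (E n)" by (rule Ceps_mono[OF Eanti]) simp
    hence "N (Suc n) \<subseteq> N n" by (auto simp: N_def)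
    thus "\<mu> n \<le> \<mu> (Suc n)" unfolding \<mu>_def by (rule cInf_superset_mono[OF Nne Nbdd])
  qed
  have bnd: "\<forall>i. \<mu> i \<le> norm a ^ 2"
  proof
    fix i show "\<mu> i \<le> norm a ^ 2" using \<mu>_lt[of i] \<eta> by linarith
  qed
  obtain L where L: "\<mu> \<longlonglongrightarrow> L" "\<And>i. \<mu> i \<le> L"
    using incseq_convergent[OF inc bnd] by blast
  have Lle: "L \<le> norm a ^ 2 - \<eta>"
    by (rule LIMSEQ_le_const2[OF L(1)]) (use \<mu>_lt less_imp_le in blast)
  have "\<exists>m. m \<in> Ceps x (E n) \<and> norm m ^ 2 < \<mu> n + E n" for n
  proof -
    have "Inf (N n) < \<mu> n + E n" using Epos[of n] by (simp add: \<mu>_def)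
    from cInf_lessD[OF Nne this] show ?thesis by (auto simp: N_def)
  qed
  then obtain m where m: "\<And>n. m n \<in> Ceps x (E n)" "\<And>n. norm (m n) ^ 2 < \<mu> n + E n" by metis
  define \<delta> where "\<delta> n = 2 * (L - \<mu> n) + 4 * E n" for n
  have \<delta>lim: "\<delta> \<longlonglongrightarrow> 0"
  proof -
    have "(\<lambda>n. 2 * (L - \<mu> n) + 4 * E n) \<longlonglongrightarrow> 2 * (L - L) + 4 * 0"
      by (intro tendsto_intros L(1) Elim)
    thus ?thesis by (simp add: \<delta>_def[abs_def])
  qed
  have dist_le: "norm (m n - m k) ^ 2 \<le> \<delta> n" if "n \<le> k" for n k
  proof -
    have "m k \<in> Ceps x (E n)" using Ceps_mono[OF Eanti[OF that]] m(1)[of k] by auto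
    hence "(1/2) *\<^sub>R (m n + m k) \<in> Ceps x (E n)" using Ceps_mid m(1)[of n] by blast
    hence h1: "\<mu> n \<le> norm ((1/2) *\<^sub>R (m n + m k)) ^ 2" by (rule \<mu>_le)
    have h2: "norm (m k) ^ 2 < L + E n" using m(2)[of k] L(2)[of k] Eanti[OF that] by linarith
    have h3: "norm (m n) ^ 2 < \<mu> n + E n" using m(2)[of n] .
    define M where "M = norm ((1/2) *\<^sub>R (m n + m k)) ^ 2"
    have "norm (m n - m k) ^ 2 = 2 * norm (m n) ^ 2 + 2 * norm (m k) ^ 2 - 4 * M"
      unfolding M_def by (rule parallelogram_mid)
    moreover have "\<mu> n \<le> M" using h1 by (simp add: M_def)
    ultimately show ?thesis unfolding \<delta>_def using h2 h3 by (smt (verit))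
  qed
  have "Cauchy m"
  proof (rule CauchyI)
    fix r :: real assume r: "r > 0"
    have "eventually (\<lambda>n. \<delta> n < r ^ 2) sequentially"
      using \<delta>lim r by (intro order_tendstoD(2)) auto
    then obtain M where M: "\<And>n. n \<ge> M \<Longrightarrow> \<delta> n < r ^ 2" by (auto simp: eventually_sequentially)
    show "\<exists>M. \<forall>n\<ge>M. \<forall>k\<ge>M. norm (m n - m k) < r"
    proof (intro exI allI impI)
      fix n k assume nk: "n \<ge> M" "k \<ge> M"
      have "norm (m n - m k) ^ 2 < r ^ 2"
      proof (cases "n \<le> k")
        case True thus ?thesis using dist_le[OF True] M[OF nk(1)] by linarith
      next
        case False
        hence "norm (m k - m n) ^ 2 \<le> \<delta> k" by (intro dist_le) auto
        thus ?thesis using M[OF nk(2)] by (simp add: norm_minus_commute)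
      qed
      thus "norm (m n - m k) < r" using r by (simp add: power_less_imp_less_base)
    qed
  qed
  then obtain ms where ms: "m \<longlonglongrightarrow> ms" using Cauchy_convergent_iff convergent_def by blast
  have msC: "ms \<in> Ceps x (E n)" for n
    unfolding Ceps_def
  proof safe
    fix v assume v: "J v \<noteq> \<infinity>"
    have "(\<lambda>k. Jr x + inner (m k) (v - x)) \<longlonglongrightarrow> Jr x + inner ms (v - x)"
      by (intro tendsto_intros ms)
    moreover have "\<forall>k\<ge>n. Jr x + inner (m k) (v - x) \<le> Jr v + E n"
    proof safe
      fix k assume "n \<le> k"
      hence "m k \<in> Ceps x (E n)" using Ceps_mono[OF Eanti] m(1)[of k] by blast
      thus "Jr x + inner (m k) (v - x) \<le> Jr v + E n" using v by (auto simp: Ceps_def)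
    qed
    ultimately show "Jr x + inner ms (v - x) \<le> Jr v + E n"
      by (intro LIMSEQ_le_const2) auto
  qed
  have "ms \<in> subdiff J x"
  proof (rule Ceps_subdiff[OF fin])
    fix e :: real assume e: "e > 0"
    obtain n where "inverse (real (Suc n)) < e" using reals_Archimedean[OF e] by blast
    hence "E n \<le> e" by (simp add: E_def inverse_eq_divide add.commute)
    thus "ms \<in> Ceps x e" using Ceps_mono msC by blast
  qed
  hence "norm a \<le> norm ms" using a by (simp add: min_norm_elem_def)
  hence "norm a ^ 2 \<le> norm ms ^ 2" by (simp add: power_mono)
  moreover have "norm ms ^ 2 \<le> L"
  proof -
    have "(\<lambda>k. norm (m k) ^ 2) \<longlonglongrightarrow> norm ms ^ 2" by (intro tendsto_intros ms)
    moreover have "(\<lambda>k. L + E k) \<longlonglongrightarrow> L + 0" by (intro tendsto_intros Elim)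
    moreover have "\<forall>k. norm (m k) ^ 2 \<le> L + E k" using m(2) L(2) by (meson add_le_cancel_right less_le_trans order.strict_implies_order)
    ultimately show ?thesis by (intro LIMSEQ_le[where X="\<lambda>k. norm (m k) ^ 2" and Y="\<lambda>k. L + E k", simplified]) auto
  qed
  ultimately show False using Lle \<eta> by linarith
qed

lemma eps_subgrad_tendsto:
  assumes a: "min_norm_elem (subdiff J x) a" and e: "(e \<longlongrightarrow> 0) F"
    and ev: "eventually (\<lambda>i. norm (b i) \<le> norm a \<and> b i \<in> Ceps x (e i)) F"
  shows "(b \<longlongrightarrow> a) F"
proof (rule tendstoI)
  fix r :: real assume r: "r > 0"
  have aS: "a \<in> subdiff J x" using a by (simp add: min_norm_elem_def)
  obtain \<epsilon> where \<epsilon>: "\<epsilon> > 0" and lb: "\<And>m. m \<in> Ceps x \<epsilon> \<Longrightarrow> norm a ^ 2 - r ^ 2 / 8 \<le> norm m ^ 2"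
    using Ceps_norm_lb[OF a, of "r ^ 2 / 8"] r by auto
  have "eventually (\<lambda>i. e i < \<epsilon>) F" using e \<epsilon> by (intro order_tendstoD(2)) auto
  with ev show "eventually (\<lambda>i. dist (b i) a < r) F"
  proof eventually_elim
    case (elim i)
    have bC: "b i \<in> Ceps x \<epsilon>" using elim Ceps_mono[of "e i" \<epsilon> x] by auto
    have "(1/2) *\<^sub>R (b i + a) \<in> Ceps x \<epsilon>" using Ceps_mid[OF bC subdiff_Ceps[OF aS]] \<epsilon> by auto
    hence "norm a ^ 2 - r ^ 2 / 8 \<le> norm ((1/2) *\<^sub>R (b i + a)) ^ 2" by (rule lb)
    moreover have "norm (b i) ^ 2 \<le> norm a ^ 2" using elim by (simp add: power_mono)
    moreover define M where "M = norm ((1/2) *\<^sub>R (b i + a)) ^ 2"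
    moreover have "norm (b i - a) ^ 2 = 2 * norm (b i) ^ 2 + 2 * norm a ^ 2 - 4 * M"
      unfolding M_def by (rule parallelogram_mid)
    moreover have "r ^ 2 / 8 * 4 < r ^ 2" using r by simp
    ultimately have "norm (b i - a) ^ 2 < r ^ 2" by (smt (verit))
    thus ?case using r by (simp add: dist_norm power_less_imp_less_base)
  qed
qed

end

lemma rb_of_deriv:
  fixes \<phi> :: "real \<Rightarrow> real"
  assumes d: "(\<phi> has_real_derivative D) (at t within {t..})" and D: "D \<le> 0" and e: "e > 0"
  shows "eventually (\<lambda>s. \<phi> s \<le> \<phi> t + e * (s - t)) (at_right t)"
proof -
  have "((\<lambda>y. (\<phi> y - \<phi> t) / (y - t)) \<longlongrightarrow> D) (at_right t)"
    using d unfolding has_field_derivative_iff at_within_Ici_at_right .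
  hence "eventually (\<lambda>y. (\<phi> y - \<phi> t) / (y - t) < D + e) (at_right t)"
    using e by (intro order_tendstoD(2)) auto
  with eventually_at_right_less[of t] show ?thesis
  proof eventually_elim
    case (elim s)
    hence "\<phi> s - \<phi> t < (D + e) * (s - t)" by (simp add: pos_divide_less_eq)
    moreover have "(D + e) * (s - t) \<le> e * (s - t)" using D elim by (intro mult_right_mono) auto
    ultimately show ?case by simp
  qed
qed

lemma dini_cont:
  fixes \<phi> :: "real \<Rightarrow> real"
  assumes ab: "a \<le> b" and c: "continuous_on {a..b} \<phi>"
    and d: "\<And>t. t \<in> {a..<b} \<Longrightarrow> \<exists>D. (\<phi> has_real_derivative D) (at t within {t..}) \<and> D \<le> 0"
  shows "\<phi> b \<le> \<phi> a"
proof (rule dini_main[OF ab])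
  fix t e :: real assume t: "t \<in> {a<..b}" and e: "e > 0"
  have "continuous_on {a..t} \<phi>" by (rule continuous_on_subset[OF c]) (use t in auto)
  hence "(\<phi> \<longlongrightarrow> \<phi> t) (at_left t)" using t by (intro continuous_on_Icc_at_leftD) auto
  hence "eventually (\<lambda>s. \<phi> t - e < \<phi> s) (at_left t)" using e by (intro order_tendstoD(1)) auto
  thus "eventually (\<lambda>s. \<phi> t < \<phi> s + e) (at_left t)" by eventually_elim simp
next
  fix t e :: real assume t: "t \<in> {a..<b}" and e: "e > 0"
  obtain D where "(\<phi> has_real_derivative D) (at t within {t..})" "D \<le> 0" using d[OF t] by blast
  thus "eventually (\<lambda>s. \<phi> s \<le> \<phi> t + e * (s - t)) (at_right t)" using rb_of_deriv e by blast
qed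

lemma dini_cont_open:
  fixes \<phi> :: "real \<Rightarrow> real"
  assumes ab: "a \<le> b" and c: "continuous_on {a..b} \<phi>"
    and d: "\<And>t. t \<in> {a<..<b} \<Longrightarrow> \<exists>D. (\<phi> has_real_derivative D) (at t within {t..}) \<and> D \<le> 0"
  shows "\<phi> b \<le> \<phi> a"
proof (cases "a = b")
  case True thus ?thesis by simp
next
  case False
  hence ab': "a < b" using ab by simp
  have le: "\<phi> b \<le> \<phi> a'" if "a' \<in> {a<..<b}" for a'
  proof (rule dini_cont[where \<phi>=\<phi>])
    show "a' \<le> b" using that by simp
    show "continuous_on {a'..b} \<phi>" by (rule continuous_on_subset[OF c]) (use that in auto)
    fix t assume "t \<in> {a'..<b}"
    thus "\<exists>D. (\<phi> has_real_derivative D) (at t within {t..}) \<and> D \<le> 0" using that by (intro d) auto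
  qed
  have lim: "(\<phi> \<longlongrightarrow> \<phi> a) (at_right a)" using c ab' by (intro continuous_on_Icc_at_rightD)
  have ev: "eventually (\<lambda>a'. a' \<in> {a<..<b}) (at_right a)"
    using eventually_at_right_field[of "\<lambda>a'. a' \<in> {a<..<b}" a] ab' by auto
  show ?thesis
    by (rule tendsto_le[OF _ lim tendsto_const]) (use ev le in \<open>auto elim: eventually_mono\<close>)
qed

lemma sqnorm_vderiv:
  fixes w :: "real \<Rightarrow> 'a::real_inner"
  assumes "(w has_vector_derivative w') (at t within S)"
  shows "((\<lambda>s. norm (w s) ^ 2) has_real_derivative (2 * inner (w t) w')) (at t within S)"
proof -
  have d: "(w has_derivative (\<lambda>h. h *\<^sub>R w')) (at t within S)" using assms by (simp add: has_vector_derivative_def)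
  have "((\<lambda>s. inner (w s) (w s)) has_derivative (\<lambda>h. inner (w t) (h *\<^sub>R w') + inner (h *\<^sub>R w') (w t))) (at t within S)"
    by (rule has_derivative_inner[OF d d])
  moreover have "(\<lambda>h. inner (w t) (h *\<^sub>R w') + inner (h *\<^sub>R w') (w t)) = (*) (2 * inner (w t) w')"
    by (rule ext) (simp add: inner_commute algebra_simps)
  ultimately show ?thesis by (simp add: has_field_derivative_def power2_norm_eq_inner)
qed

lemma inner_vderiv:
  fixes w :: "real \<Rightarrow> 'a::real_inner"
  assumes "(w has_vector_derivative w') (at t within S)"
  shows "((\<lambda>s. inner (w s) n) has_real_derivative (inner w' n)) (at t within S)"
proof -
  have d: "(w has_derivative (\<lambda>h. h *\<^sub>R w')) (at t within S)" using assms by (simp add: has_vector_derivative_def)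
  have "((\<lambda>s. inner (w s) n) has_derivative (\<lambda>h. inner (w t) 0 + inner (h *\<^sub>R w') n)) (at t within S)"
    by (rule has_derivative_inner[OF d has_derivative_const])
  moreover have "(\<lambda>h. inner (w t) 0 + inner (h *\<^sub>R w') n) = (*) (inner w' n)"
    by (rule ext) (simp add: algebra_simps)
  ultimately show ?thesis by (simp add: has_field_derivative_def)
qed

lemma vderiv_quot:
  fixes f :: "real \<Rightarrow> 'a::real_normed_vector"
  assumes "(f has_vector_derivative f') (at t within {t..})"
  shows "((\<lambda>h. (1/h) *\<^sub>R (f (t + h) - f t)) \<longlongrightarrow> f') (at_right 0)"
proof -
  have "((\<lambda>y. norm ((f y - f t) - (y - t) *\<^sub>R f') / norm (y - t)) \<longlongrightarrow> 0) (at_right t)"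
    using assms unfolding has_vector_derivative_def has_derivative_iff_norm at_within_Ici_at_right by simp
  hence L: "((\<lambda>h. norm ((f (h + t) - f t) - h *\<^sub>R f') / norm h) \<longlongrightarrow> 0) (at_right 0)"
    unfolding filterlim_at_right_to_0[of _ _ t] by simp
  have "eventually (\<lambda>h. norm ((f (h + t) - f t) - h *\<^sub>R f') / norm h = norm ((1/h) *\<^sub>R (f (t + h) - f t) - f')) (at_right 0)"
    using eventually_at_right_less[of "0::real"]
  proof eventually_elim
    case (elim h)
    have "(1/h) *\<^sub>R (f (t + h) - f t) - f' = (1/h) *\<^sub>R ((f (h + t) - f t) - h *\<^sub>R f')"
      using elim by (simp add: algebra_simps)
    thus ?case using elim by (simp add: divide_simps)
  qed
  from Lim_transform_eventually[OF L this]
  have "((\<lambda>h. (1/h) *\<^sub>R (f (t + h) - f t) - f') \<longlongrightarrow> 0) (at_right 0)"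
    by (rule tendsto_norm_zero_cancel)
  thus ?thesis by (rule LIM_zero_cancel)
qed

locale gf = hfun J p for J :: "'a::{real_inner,complete_space} \<Rightarrow> ereal" and p +
  fixes u :: "real \<Rightarrow> 'a" and \<zeta> :: "real \<Rightarrow> 'a"
  assumes lsc: "lsc_fun J" and ucont: "continuous_on {0..} u"
    and zmin: "\<And>t. t > 0 \<Longrightarrow> min_norm_elem (subdiff J (u t)) (\<zeta> t)"
    and uder: "\<And>t. t > 0 \<Longrightarrow> (u has_vector_derivative - \<zeta> t) (at t within {t..})"
begin

lemma zsub: "t > 0 \<Longrightarrow> \<zeta> t \<in> subdiff J (u t)"
  using zmin by (simp add: min_norm_elem_def)

lemma ufin: "t > 0 \<Longrightarrow> J (u t) \<noteq> \<infinity>"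
  using subdiff_fin[OF zsub] .

lemma ucont_sub: "0 \<le> a \<Longrightarrow> continuous_on {a..b} u"
  by (rule continuous_on_subset[OF ucont]) auto

lemma ucont_at: "t > 0 \<Longrightarrow> isCont u t"
proof -
  assume t: "t > 0"
  have "continuous_on {0<..} u" by (rule continuous_on_subset[OF ucont]) auto
  thus ?thesis using t by (subst (asm) continuous_on_eq_continuous_at) auto
qed

lemma shift_deriv:
  assumes t: "t > 0" and \<sigma>: "\<sigma> \<ge> 0"
  shows "((\<lambda>\<tau>. u (\<tau> + \<sigma>)) has_vector_derivative - \<zeta> (t + \<sigma>)) (at t within {t..})"
proof -
  have f: "((\<lambda>\<tau>. \<tau> + \<sigma>) has_vector_derivative 1) (at t within {t..})"
    by (auto intro!: derivative_eq_intros)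
  have img: "(\<lambda>\<tau>. \<tau> + \<sigma>) ` {t..} = {t + \<sigma>..}"
  proof (rule set_eqI, rule iffI)
    fix y assume "y \<in> (\<lambda>\<tau>. \<tau> + \<sigma>) ` {t..}" thus "y \<in> {t + \<sigma>..}" by auto
  next
    fix y assume y: "y \<in> {t + \<sigma>..}"
    show "y \<in> (\<lambda>\<tau>. \<tau> + \<sigma>) ` {t..}" by (rule image_eqI[of _ _ "y - \<sigma>"]) (use y in auto)
  qed
  have g: "(u has_vector_derivative - \<zeta> (t + \<sigma>)) (at ((\<lambda>\<tau>. \<tau> + \<sigma>) t) within (\<lambda>\<tau>. \<tau> + \<sigma>) ` {t..})"
    unfolding img using uder[of "t + \<sigma>"] t \<sigma> by simp
  from vector_diff_chain_within[OF f g] show ?thesis by (simp add: o_def)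
qed

lemma zeta_mono:
  assumes s': "0 < s'" and ss: "s' \<le> s"
  shows "norm (\<zeta> s) \<le> norm (\<zeta> s')"
proof -
  have key: "norm (u (s + \<sigma>) - u s) \<le> norm (u (s' + \<sigma>) - u s')" if \<sigma>: "\<sigma> > 0" for \<sigma>
  proof -
    define \<phi> where "\<phi> \<tau> = norm (u (\<tau> + \<sigma>) - u \<tau>) ^ 2" for \<tau>
    have "\<phi> s \<le> \<phi> s'"
    proof (rule dini_cont_open[where \<phi>=\<phi>])
      show "s' \<le> s" by fact
      have "continuous_on {s'..s} (\<lambda>\<tau>. u (\<tau> + \<sigma>))"
        by (rule continuous_on_compose2[OF ucont]) (use s' \<sigma> in \<open>auto intro!: continuous_intros\<close>)
      moreover have "continuous_on {s'..s} u" using ucont_sub s' by simp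
      ultimately show "continuous_on {s'..s} \<phi>" unfolding \<phi>_def by (intro continuous_intros)
    next
      fix \<tau> assume \<tau>: "\<tau> \<in> {s'<..<s}"
      hence \<tau>0: "\<tau> > 0" using s' by simp
      have "((\<lambda>\<tau>. u (\<tau> + \<sigma>) - u \<tau>) has_vector_derivative (- \<zeta> (\<tau> + \<sigma>) - - \<zeta> \<tau>)) (at \<tau> within {\<tau>..})"
        by (intro has_vector_derivative_diff shift_deriv uder \<tau>0) (use \<sigma> in auto)
      from sqnorm_vderiv[OF this]
      have d: "(\<phi> has_real_derivative 2 * inner (u (\<tau> + \<sigma>) - u \<tau>) (- \<zeta> (\<tau> + \<sigma>) - - \<zeta> \<tau>)) (at \<tau> within {\<tau>..})"
        unfolding \<phi>_def .
      have "0 \<le> inner (\<zeta> (\<tau> + \<sigma>) - \<zeta> \<tau>) (u (\<tau> + \<sigma>) - u \<tau>)"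
        by (rule subdiff_mono[OF zsub zsub]) (use \<tau>0 \<sigma> in auto)
      moreover have "inner (u (\<tau> + \<sigma>) - u \<tau>) (- \<zeta> (\<tau> + \<sigma>) - - \<zeta> \<tau>) = - inner (\<zeta> (\<tau> + \<sigma>) - \<zeta> \<tau>) (u (\<tau> + \<sigma>) - u \<tau>)"
        by (simp add: inner_commute inner_diff_left inner_diff_right)
      ultimately have "2 * inner (u (\<tau> + \<sigma>) - u \<tau>) (- \<zeta> (\<tau> + \<sigma>) - - \<zeta> \<tau>) \<le> 0" by linarith
      with d show "\<exists>D. (\<phi> has_real_derivative D) (at \<tau> within {\<tau>..}) \<and> D \<le> 0" by blast
    qed
    from power2_le_imp_le[OF this[unfolded \<phi>_def] norm_ge_zero] show ?thesis .
  qed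
  have l1: "((\<lambda>h. norm ((1/h) *\<^sub>R (u (s + h) - u s))) \<longlongrightarrow> norm (- \<zeta> s)) (at_right 0)"
    by (intro tendsto_norm vderiv_quot uder) (use s' ss in auto)
  have l2: "((\<lambda>h. norm ((1/h) *\<^sub>R (u (s' + h) - u s'))) \<longlongrightarrow> norm (- \<zeta> s')) (at_right 0)"
    by (intro tendsto_norm vderiv_quot uder) (use s' in auto)
  have ev: "eventually (\<lambda>h. norm ((1/h) *\<^sub>R (u (s + h) - u s)) \<le> norm ((1/h) *\<^sub>R (u (s' + h) - u s'))) (at_right 0)"
    using eventually_at_right_less[of "0::real"]
  proof eventually_elim
    case (elim h)
    thus ?case using key[OF elim] by (simp add: divide_right_mono add.commute)
  qed
  have "norm (- \<zeta> s) \<le> norm (- \<zeta> s')" by (rule tendsto_le[OF _ l2 l1 ev]) simp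
  thus ?thesis by simp
qed

lemma zeta_rcont:
  assumes t: "t > 0"
  shows "(\<zeta> \<longlongrightarrow> \<zeta> t) (at_right t)"
proof (rule eps_subgrad_tendsto[OF zmin[OF t], where e = "\<lambda>s. 2 * norm (\<zeta> t) * norm (u s - u t)"])
  have "(u \<longlongrightarrow> u t) (at_right t)"
    using ucont_at[OF t] unfolding isCont_def by (rule tendsto_within_subset) simp
  hence "((\<lambda>s. 2 * norm (\<zeta> t) * norm (u s - u t)) \<longlongrightarrow> 2 * norm (\<zeta> t) * norm (u t - u t)) (at_right t)"
    by (intro tendsto_intros)
  thus "((\<lambda>s. 2 * norm (\<zeta> t) * norm (u s - u t)) \<longlongrightarrow> 0) (at_right t)" by simp
  show "eventually (\<lambda>s. norm (\<zeta> s) \<le> norm (\<zeta> t) \<and> \<zeta> s \<in> Ceps (u t) (2 * norm (\<zeta> t) * norm (u s - u t))) (at_right t)"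
    using eventually_at_right_less[of t]
  proof eventually_elim
    case (elim s)
    have s0: "s > 0" using elim t by simp
    have zn: "norm (\<zeta> s) \<le> norm (\<zeta> t)" using zeta_mono[OF t] elim by simp
    have "\<zeta> s \<in> Ceps (u t) (2 * norm (\<zeta> t) * norm (u s - u t))"
      unfolding Ceps_def
    proof safe
      fix v assume v: "J v \<noteq> \<infinity>"
      have h1: "Jr (u s) + inner (\<zeta> s) (v - u s) \<le> Jr v" by (rule subgrad[OF zsub[OF s0] v])
      have h2: "Jr (u t) + inner (\<zeta> t) (u s - u t) \<le> Jr (u s)" by (rule subgrad[OF zsub[OF t] ufin[OF s0]])
      have "inner (\<zeta> s - \<zeta> t) (u s - u t) \<le> norm (\<zeta> s - \<zeta> t) * norm (u s - u t)"
        by (rule norm_cauchy_schwarz)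
      also have "\<dots> \<le> (2 * norm (\<zeta> t)) * norm (u s - u t)"
      proof (rule mult_right_mono)
        have "norm (\<zeta> s - \<zeta> t) \<le> norm (\<zeta> s) + norm (\<zeta> t)" by (rule norm_triangle_ineq4)
        thus "norm (\<zeta> s - \<zeta> t) \<le> 2 * norm (\<zeta> t)" using zn by simp
      qed simp
      finally have h3: "inner (\<zeta> s - \<zeta> t) (u s - u t) \<le> 2 * norm (\<zeta> t) * norm (u s - u t)" .
      have e1: "inner (\<zeta> s) (v - u t) = inner (\<zeta> s) (v - u s) + inner (\<zeta> s) (u s - u t)"
        by (simp add: inner_diff_right)
      have e2: "inner (\<zeta> s - \<zeta> t) (u s - u t) = inner (\<zeta> s) (u s - u t) - inner (\<zeta> t) (u s - u t)"
        by (simp add: inner_diff_left)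
      show "Jr (u t) + inner (\<zeta> s) (v - u t) \<le> Jr v + 2 * norm (\<zeta> t) * norm (u s - u t)"
        using h1 h2 h3 e1 e2 by linarith
    qed
    thus ?case using zn by simp
  qed
qed

lemma nsq_deriv:
  assumes t: "t > 0"
  shows "((\<lambda>s. norm (u s) ^ 2) has_real_derivative (- 2 * p * Jr (u t))) (at t within {t..})"
proof -
  have "((\<lambda>s. norm (u s) ^ 2) has_real_derivative (2 * inner (u t) (- \<zeta> t))) (at t within {t..})"
    by (rule sqnorm_vderiv[OF uder[OF t]])
  moreover have "2 * inner (u t) (- \<zeta> t) = - 2 * p * Jr (u t)"
    using euler[OF zsub[OF t]] by (simp add: inner_commute)
  ultimately show ?thesis by (simp add: mult.assoc)
qed

lemma norm_mono:
  assumes "0 \<le> s" "s \<le> t"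
  shows "norm (u t) \<le> norm (u s)"
proof -
  have "norm (u t) ^ 2 \<le> norm (u s) ^ 2"
  proof (rule dini_cont_open[where \<phi>="\<lambda>s. norm (u s) ^ 2"])
    show "s \<le> t" by fact
    show "continuous_on {s..t} (\<lambda>s. norm (u s) ^ 2)" using ucont_sub[OF assms(1)] by (intro continuous_intros)
    fix \<tau> assume \<tau>: "\<tau> \<in> {s<..<t}"
    hence \<tau>0: "\<tau> > 0" using assms by simp
    have "- 2 * p * Jr (u \<tau>) \<le> 0" using p1 Jr_nonneg[of "u \<tau>"] by simp
    thus "\<exists>D. ((\<lambda>s. norm (u s) ^ 2) has_real_derivative D) (at \<tau> within {\<tau>..}) \<and> D \<le> 0"
      using nsq_deriv[OF \<tau>0] by blast
  qed
  from power2_le_imp_le[OF this norm_ge_zero] show ?thesis .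
qed

lemma orth_const:
  assumes n: "n \<in> nullspace J" and t: "0 \<le> t"
  shows "inner (u t) n = inner (u 0) n"
proof -
  have d: "((\<lambda>s. c * inner (u s) n) has_real_derivative 0) (at \<tau> within {\<tau>..})" if "\<tau> > 0" for \<tau> c
  proof -
    have "((\<lambda>s. inner (u s) n) has_real_derivative inner (- \<zeta> \<tau>) n) (at \<tau> within {\<tau>..})"
      by (rule inner_vderiv[OF uder[OF that]])
    moreover have "inner (- \<zeta> \<tau>) n = 0" using null_orth[OF zsub[OF that] n] by simp
    ultimately have "((\<lambda>s. inner (u s) n) has_real_derivative 0) (at \<tau> within {\<tau>..})" by simp
    from DERIV_cmult[OF this, of c] show ?thesis by simp
  qed
  have cc: "continuous_on {0..t} (\<lambda>s. c * inner (u s) n)" for c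
    using ucont_sub[of 0 t] by (intro continuous_intros) auto
  have "(\<lambda>s. c * inner (u s) n) t \<le> (\<lambda>s. c * inner (u s) n) 0" for c
    by (rule dini_cont_open[OF t cc]) (use d in auto)
  from this[of 1] this[of "-1"] show ?thesis by simp
qed

end

context gf begin

definition N where "N s = norm (u s) ^ 2"
definition ir where "ir s = N s powr (-1/2)"
definition y where "y s = ir s *\<^sub>R u s"
definition Rq where "Rq s = Jr (y s)"
definition G where "G s = N s powr ((2 - p) / 2)"
definition y' where "y' t = ir t *\<^sub>R (- \<zeta> t) + (p * Jr (u t) * ir t ^ 3) *\<^sub>R u t"

lemma N_pos: "u s \<noteq> 0 \<Longrightarrow> N s > 0"
  by (simp add: N_def)

lemma N_powr: "u s \<noteq> 0 \<Longrightarrow> N s powr a = norm (u s) powr (2 * a)"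
proof -
  assume "u s \<noteq> 0"
  have e: "N s = norm (u s) powr 2" by (simp add: N_def powr_numeral)
  show ?thesis unfolding e powr_powr by simp
qed

lemma ir_pos: "u s \<noteq> 0 \<Longrightarrow> ir s > 0"
proof -
  assume "u s \<noteq> 0"
  hence "N s > 0" by (rule N_pos)
  thus ?thesis by (simp add: ir_def)
qed

lemma ir_eq: "u s \<noteq> 0 \<Longrightarrow> ir s = 1 / norm (u s)"
proof -
  assume us: "u s \<noteq> 0"
  have "ir s = norm (u s) powr (2 * (-1/2))" unfolding ir_def by (rule N_powr[OF us])
  also have "(2 * (-1/2)) = -(1::real)" by simp
  also have "norm (u s) powr (-1) = inverse (norm (u s) powr 1)" by (rule powr_minus)
  also have "norm (u s) powr 1 = norm (u s)" using us by simp
  finally show ?thesis by (simp add: divide_inverse)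
qed

lemma Rq_eq: "u s \<noteq> 0 \<Longrightarrow> Rq s = ir s powr p * Jr (u s)"
  using Jr_hom[of "ir s" "u s"] ir_pos[of s] by (simp add: Rq_def y_def)

lemma ir_deriv:
  assumes t: "t > 0" and ut: "u t \<noteq> 0"
  shows "(ir has_real_derivative (p * Jr (u t) * ir t ^ 3)) (at t within {t..})"
proof -
  have d1: "((\<lambda>z. z powr (-1/2)) has_real_derivative (-1/2) * (N t) powr (-1/2 - 1)) (at (N t))"
    by (rule has_real_derivative_powr) (rule N_pos[OF ut])
  have d2: "(N has_real_derivative (- 2 * p * Jr (u t))) (at t within {t..})"
    using nsq_deriv[OF t] unfolding N_def[abs_def] .
  from DERIV_chain2[OF d1 d2]
  have "(ir has_real_derivative (-1/2) * (N t) powr (-1/2 - 1) * (- 2 * p * Jr (u t))) (at t within {t..})"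
    unfolding ir_def[abs_def] .
  moreover have "(N t) powr (-1/2 - 1) = ir t ^ 3"
    unfolding ir_def power3_eq_cube powr_add[symmetric]
    by (rule arg_cong[where f="\<lambda>e. N t powr e"]) simp
  ultimately show ?thesis by (simp add: algebra_simps)
qed

lemma y_deriv:
  assumes t: "t > 0" and ut: "u t \<noteq> 0"
  shows "(y has_vector_derivative y' t) (at t within {t..})"
proof -
  have "((\<lambda>s. ir s *\<^sub>R u s) has_vector_derivative (ir t *\<^sub>R (- \<zeta> t) + (p * Jr (u t) * ir t ^ 3) *\<^sub>R u t)) (at t within {t..})"
    by (rule has_vector_derivative_scaleR[OF ir_deriv[OF t ut] uder[OF t]])
  thus ?thesis unfolding y_def[abs_def] y'_def .
qed

lemma inner_zy:
  assumes t: "t > 0" and ut: "u t \<noteq> 0"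
  shows "inner (\<zeta> t) (y' t) \<le> 0"
proof -
  define r where "r = norm (u t)"
  define z where "z = norm (\<zeta> t)"
  define j where "j = p * Jr (u t)"
  have r: "r > 0" using ut by (simp add: r_def)
  have irr: "ir t * r = 1" using ir_eq[OF ut] r by (simp add: r_def)
  have ir0: "ir t > 0" using ir_pos[OF ut] .
  have eu: "inner (\<zeta> t) (u t) = j" using euler[OF zsub[OF t]] by (simp add: j_def)
  have j0: "0 \<le> j" using p1 Jr_nonneg[of "u t"] by (simp add: j_def)
  have jz: "j \<le> z * r" using norm_cauchy_schwarz[of "\<zeta> t" "u t"] eu by (simp add: z_def r_def)
  have "j ^ 2 \<le> (z * r) ^ 2" by (rule power_mono[OF jz j0])
  hence "ir t ^ 3 * j ^ 2 \<le> ir t ^ 3 * (z * r) ^ 2" using ir0 by (intro mult_left_mono) auto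
  also have "ir t ^ 3 * (z * r) ^ 2 = ir t * z ^ 2 * (ir t * r) ^ 2" by (simp add: power2_eq_square power3_eq_cube)
  also have "\<dots> = ir t * z ^ 2" using irr by simp
  finally have A: "ir t ^ 3 * j ^ 2 \<le> ir t * z ^ 2" .
  have zz: "inner (\<zeta> t) (\<zeta> t) = z ^ 2" by (simp add: z_def power2_norm_eq_inner)
  have "inner (\<zeta> t) (y' t) = - ir t * inner (\<zeta> t) (\<zeta> t) + (p * Jr (u t) * ir t ^ 3) * inner (\<zeta> t) (u t)"
    unfolding y'_def by (simp add: inner_add_right inner_diff_right)
  also have "\<dots> = - ir t * z ^ 2 + ir t ^ 3 * j ^ 2"
    unfolding zz eu by (simp add: j_def power2_eq_square)
  finally show ?thesis using A by simp
qed

lemma Jy_fin: "t > 0 \<Longrightarrow> J (y t) \<noteq> \<infinity>"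
  unfolding y_def by (rule J_fin_hom[OF ufin])

lemma Rq_rb:
  assumes t: "t > 0" and ut: "u t \<noteq> 0" and e: "e > 0"
  shows "eventually (\<lambda>s. Rq s \<le> Rq t + e * (s - t)) (at_right t)"
proof -
  define \<eta> where "\<eta> s = (ir s powr (p - 1)) *\<^sub>R \<zeta> s" for s
  define q where "q s = (1 / (s - t)) *\<^sub>R (y s - y t)" for s
  have ulim: "(u \<longlongrightarrow> u t) (at_right t)"
    using ucont_at[OF t] unfolding isCont_def by (rule tendsto_within_subset) simp
  have ev_ne: "eventually (\<lambda>s. u s \<noteq> 0) (at_right t)"
    using tendsto_imp_eventually_ne[OF ulim ut] .
  have qlim: "(q \<longlongrightarrow> y' t) (at_right t)"
  proof -
    have "((\<lambda>h. (1/h) *\<^sub>R (y (t + h) - y t)) \<longlongrightarrow> y' t) (at_right 0)"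
      by (rule vderiv_quot[OF y_deriv[OF t ut]])
    thus ?thesis unfolding filterlim_at_right_to_0[of _ _ t] q_def by (simp add: add.commute)
  qed
  have irlim: "(ir \<longlongrightarrow> ir t) (at_right t)"
  proof -
    have "continuous (at t within {t..}) ir"
      using ir_deriv[OF t ut] by (rule DERIV_continuous)
    thus ?thesis unfolding continuous_within at_within_Ici_at_right .
  qed
  have etalim: "(\<eta> \<longlongrightarrow> \<eta> t) (at_right t)"
    unfolding \<eta>_def[abs_def]
    by (intro tendsto_intros irlim zeta_rcont t) (use ir_pos[OF ut] in auto)
  have "((\<lambda>s. inner (\<eta> s) (q s)) \<longlongrightarrow> inner (\<eta> t) (y' t)) (at_right t)"
    by (intro tendsto_intros etalim qlim)
  moreover have "inner (\<eta> t) (y' t) < e"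
  proof -
    have "inner (\<eta> t) (y' t) = ir t powr (p - 1) * inner (\<zeta> t) (y' t)" by (simp add: \<eta>_def)
    also have "\<dots> \<le> 0" using inner_zy[OF t ut] by (simp add: mult_nonneg_nonpos)
    finally show ?thesis using e by simp
  qed
  ultimately have ev_in: "eventually (\<lambda>s. inner (\<eta> s) (q s) < e) (at_right t)"
    by (rule order_tendstoD(2))
  show ?thesis
    using ev_in ev_ne eventually_at_right_less[of t]
  proof eventually_elim
    case (elim s)
    have s0: "s > 0" using elim t by simp
    have "\<eta> s \<in> subdiff J (y s)"
      unfolding \<eta>_def y_def by (rule subdiff_scale[OF zsub[OF s0] ir_pos[OF elim(2)]])
    from subgrad[OF this Jy_fin[OF t]]
    have "Rq s + inner (\<eta> s) (y t - y s) \<le> Rq t" by (simp add: Rq_def)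
    moreover have "inner (\<eta> s) (y s - y t) = (s - t) * inner (\<eta> s) (q s)"
      using elim by (simp add: q_def)
    moreover have "(s - t) * inner (\<eta> s) (q s) \<le> (s - t) * e"
      using elim by (intro mult_left_mono) auto
    moreover have "inner (\<eta> s) (y t - y s) = - inner (\<eta> s) (y s - y t)"
      by (simp add: inner_diff_right)
    ultimately show ?case by (simp add: algebra_simps)
  qed
qed

lemma Rq_lsc:
  assumes t: "t > 0" and ut: "u t \<noteq> 0" and e: "e > 0"
  shows "eventually (\<lambda>s. Rq t < Rq s + e) (at_left t)"
proof -
  have ulim: "(u \<longlongrightarrow> u t) (at_left t)"
    using ucont_at[OF t] unfolding isCont_def by (rule tendsto_within_subset) simp
  have Nlim: "(N \<longlongrightarrow> N t) (at_left t)"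
    unfolding N_def[abs_def] by (intro tendsto_intros ulim)
  have ylim: "(y \<longlongrightarrow> y t) (at_left t)"
    unfolding y_def[abs_def] ir_def[abs_def]
    by (intro tendsto_intros Nlim ulim) (use N_pos[OF ut] in auto)
  define K where "K = {x. J x \<le> ereal (Rq t - e)}"
  have "closed K" using lsc unfolding lsc_fun_def K_def by blast
  hence "open (- K)" by auto
  moreover have "y t \<in> - K"
    using J_real[OF Jy_fin[OF t]] e by (simp add: K_def Rq_def)
  ultimately have ev1: "eventually (\<lambda>s. y s \<in> - K) (at_left t)"
    by (rule topological_tendstoD[OF ylim])
  have ev2: "eventually (\<lambda>s. s > 0) (at_left t)"
    using t unfolding eventually_at_left_field by (intro exI[of _ 0]) auto
  show ?thesis using ev1 ev2
  proof eventually_elim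
    case (elim s)
    hence "ereal (Rq t - e) < J (y s)" by (simp add: K_def not_le)
    also have "J (y s) = ereal (Rq s)" using J_real[OF Jy_fin[of s]] elim by (simp add: Rq_def)
    finally show ?case by simp
  qed
qed

lemma Rq_mono:
  assumes s: "0 < s" and st: "s \<le> t" and nz: "\<And>\<tau>. \<tau> \<in> {s..t} \<Longrightarrow> u \<tau> \<noteq> 0"
  shows "Rq t \<le> Rq s"
proof (rule dini_main[OF st])
  fix \<tau> e :: real assume "\<tau> \<in> {s<..t}" "e > 0"
  thus "eventually (\<lambda>\<sigma>. Rq \<tau> < Rq \<sigma> + e) (at_left \<tau>)"
    using Rq_lsc nz s by auto
next
  fix \<tau> e :: real assume "\<tau> \<in> {s..<t}" "e > 0"
  thus "eventually (\<lambda>\<sigma>. Rq \<sigma> \<le> Rq \<tau> + e * (\<sigma> - \<tau>)) (at_right \<tau>)"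
    using Rq_rb nz s by auto
qed

lemma G_deriv:
  assumes t: "t > 0" and ut: "u t \<noteq> 0"
  shows "(G has_real_derivative (- (2 - p) * p * Rq t)) (at t within {t..})"
proof -
  have d1: "((\<lambda>z. z powr ((2 - p) / 2)) has_real_derivative ((2 - p) / 2) * (N t) powr ((2 - p) / 2 - 1)) (at (N t))"
    by (rule has_real_derivative_powr) (rule N_pos[OF ut])
  have d2: "(N has_real_derivative (- 2 * p * Jr (u t))) (at t within {t..})"
    using nsq_deriv[OF t] unfolding N_def[abs_def] .
  from DERIV_chain2[OF d1 d2]
  have "(G has_real_derivative ((2 - p) / 2) * (N t) powr ((2 - p) / 2 - 1) * (- 2 * p * Jr (u t))) (at t within {t..})"
    unfolding G_def[abs_def] .
  moreover have "Rq t = (N t) powr ((2 - p) / 2 - 1) * Jr (u t)"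
  proof -
    have "Rq t = (N t powr (-1/2)) powr p * Jr (u t)" using Rq_eq[OF ut] by (simp add: ir_def)
    also have "\<dots> = N t powr ((2 - p) / 2 - 1) * Jr (u t)" by (simp add: powr_powr field_simps)
    finally show ?thesis .
  qed
  moreover have "((2 - p) / 2) * X * (- 2 * p * j) = - (2 - p) * p * (X * j)" for X j :: real
    by (simp add: field_simps)
  ultimately show ?thesis by metis
qed

lemma G_cont: "0 \<le> a \<Longrightarrow> continuous_on {a..b} G"
  unfolding G_def[abs_def] N_def
  by (rule continuous_on_powr') (use p2 ucont_sub in \<open>auto intro!: continuous_intros\<close>)

lemma G_nonneg: "0 \<le> G s"
  by (simp add: G_def)

lemma G_zero: "u s = 0 \<Longrightarrow> G s = 0"
  by (simp add: G_def N_def)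

end

locale gfm = gf J p u \<zeta> for J :: "'a::{real_inner,complete_space} \<Rightarrow> ereal" and p u \<zeta> +
  fixes f :: 'a
  assumes u0: "u 0 = f" and fH0: "f \<in> H0 J" and lam1: "lambda1 p J > 0"
begin

lemma f_ne: "f \<noteq> 0" using fH0 by (simp add: H0_def)

lemma uH0:
  assumes t: "0 \<le> t" and ut: "u t \<noteq> 0"
  shows "u t \<in> H0 J"
proof -
  have "inner (u t) n = 0" if "n \<in> nullspace J" for n
    using orth_const[OF that t] fH0 that u0 by (simp add: H0_def)
  thus ?thesis using ut by (simp add: H0_def)
qed

lemma lam_exists: "\<exists>lm>0. \<forall>x\<in>H0 J. J x \<noteq> \<infinity> \<longrightarrow> lm * norm x powr p \<le> p * Jr x"
proof -
  obtain lm where lmf: "lm > 0" "ereal lm \<le> lambda1 p J"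
  proof (cases "lambda1 p J")
    case (real l) thus ?thesis using that lam1 by auto
  next
    case PInf thus ?thesis using that[of 1] by auto
  next
    case MInf thus ?thesis using lam1 by auto
  qed
  have "lm * norm x powr p \<le> p * Jr x" if x: "x \<in> H0 J" "J x \<noteq> \<infinity>" for x
  proof -
    have xn: "x \<noteq> 0" using x by (simp add: H0_def)
    hence np: "norm x powr p > 0" by simp
    have "lambda1 p J \<le> ereal p * J x / ereal (norm x powr p)"
      unfolding lambda1_def by (rule INF_lower[OF x(1)])
    also have "\<dots> = ereal (p * Jr x / norm x powr p)"
      using J_real[OF x(2)] np by simp
    finally have X: "lambda1 p J \<le> ereal (p * Jr x / norm x powr p)" .
    have "ereal lm \<le> ereal (p * Jr x / norm x powr p)" by (rule order_trans[OF lmf(2) X])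
    hence "lm \<le> p * Jr x / norm x powr p" by simp
    thus ?thesis using np by (simp add: pos_le_divide_eq)
  qed
  thus ?thesis using lmf(1) by blast
qed

lemma Rq_lb:
  assumes l: "\<forall>x\<in>H0 J. J x \<noteq> \<infinity> \<longrightarrow> lm * norm x powr p \<le> p * Jr x"
    and t: "t > 0" and ut: "u t \<noteq> 0"
  shows "lm \<le> p * Rq t"
proof -
  have n: "norm (u t) > 0" using ut by simp
  have "lm * norm (u t) powr p \<le> p * Jr (u t)" using l uH0[of t] t ut ufin[OF t] by auto
  moreover have "Rq t = Jr (u t) / norm (u t) powr p"
    using Rq_eq[OF ut] ir_eq[OF ut] n by (simp add: powr_divide)
  ultimately show ?thesis using n by (simp add: pos_le_divide_eq)
qed

lemma exists_zero: "\<exists>t>0. u t = 0"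
proof (rule ccontr)
  assume "\<not> ?thesis"
  hence nz: "\<And>t. t > 0 \<Longrightarrow> u t \<noteq> 0" by auto
  obtain lm where lmf: "lm > 0" and l: "\<forall>x\<in>H0 J. J x \<noteq> \<infinity> \<longrightarrow> lm * norm x powr p \<le> p * Jr x"
    using lam_exists by blast
  define c where "c = (2 - p) * lm"
  have c: "c > 0" using lmf p2 by (simp add: c_def)
  define \<sigma> where "\<sigma> = 1 + (G 1 + 1) / c"
  have \<sigma>1: "1 \<le> \<sigma>" using c G_nonneg[of 1] by (simp add: \<sigma>_def)
  have "(\<lambda>s. G s + c * s) \<sigma> \<le> (\<lambda>s. G s + c * s) 1"
  proof (rule dini_cont[OF \<sigma>1])
    show "continuous_on {1..\<sigma>} (\<lambda>s. G s + c * s)"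
      using G_cont[of 1 \<sigma>] by (intro continuous_intros) auto
    fix t assume t: "t \<in> {1..<\<sigma>}"
    hence t0: "t > 0" by simp
    have dc: "((\<lambda>s. c * s) has_real_derivative c * 1) (at t within {t..})"
      by (rule DERIV_cmult[OF DERIV_ident])
    have "((\<lambda>s. G s + c * s) has_real_derivative (- (2 - p) * p * Rq t + c * 1)) (at t within {t..})"
      by (rule DERIV_add[OF G_deriv[OF t0 nz[OF t0]] dc])
    moreover have "- (2 - p) * p * Rq t + c * 1 \<le> 0"
    proof -
      have "lm \<le> p * Rq t" by (rule Rq_lb[OF l t0 nz[OF t0]])
      hence "(2 - p) * lm \<le> (2 - p) * (p * Rq t)" using p2 by (intro mult_left_mono) auto
      thus ?thesis by (simp add: c_def algebra_simps)
    qed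
    ultimately show "\<exists>D. ((\<lambda>s. G s + c * s) has_real_derivative D) (at t within {t..}) \<and> D \<le> 0" by blast
  qed
  hence "G \<sigma> \<le> G 1 + c - c * \<sigma>" by simp
  also have "c * \<sigma> = c + (G 1 + 1)" using c by (simp add: \<sigma>_def field_simps)
  finally have "G \<sigma> \<le> -1" by simp
  thus False using G_nonneg[of \<sigma>] by simp
qed

definition Sx where "Sx = {T. T > 0 \<and> (\<forall>t\<ge>T. u t = 0)}"

lemma Sx_ne: "Sx \<noteq> {}"
proof -
  obtain t0 where t0: "t0 > 0" "u t0 = 0" using exists_zero by blast
  have "u t = 0" if "t \<ge> t0" for t using norm_mono[of t0 t] t0 that by simp
  thus ?thesis using t0 by (auto simp: Sx_def)
qed

lemma Sx_bdd: "bdd_below Sx"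
  by (rule bdd_belowI[of _ 0]) (auto simp: Sx_def)

lemma Tex_nonneg: "0 \<le> extinction_time u"
  unfolding extinction_time_def Sx_def[symmetric]
  by (rule cInf_greatest[OF Sx_ne]) (auto simp: Sx_def)

lemma after_Tex: "t > extinction_time u \<Longrightarrow> u t = 0"
proof -
  assume "t > extinction_time u"
  hence "Inf Sx < t" by (simp add: extinction_time_def Sx_def)
  then obtain T where "T \<in> Sx" "T < t" using cInf_lessD[OF Sx_ne] by blast
  thus "u t = 0" by (auto simp: Sx_def)
qed

lemma u_Tex: "u (extinction_time u) = 0"
proof -
  define T where "T = extinction_time u"
  have T0: "0 \<le> T" using Tex_nonneg by (simp add: T_def)
  have "(u \<longlongrightarrow> u T) (at T within {0..})"
    using ucont T0 by (simp add: continuous_on_def)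
  hence l1: "(u \<longlongrightarrow> u T) (at_right T)"
    by (rule tendsto_within_subset) (use T0 in auto)
  have "eventually (\<lambda>s. u s = 0) (at_right T)"
    using eventually_at_right_less[of T] by eventually_elim (use after_Tex T_def in auto)
  hence l2: "(u \<longlongrightarrow> 0) (at_right T)"
    by (rule tendsto_eventually)
  show ?thesis using tendsto_unique[OF _ l1 l2] by (simp add: T_def)
qed

lemma Tex_pos: "0 < extinction_time u"
proof (rule ccontr)
  assume "\<not> ?thesis"
  hence "extinction_time u = 0" using Tex_nonneg by simp
  thus False using u_Tex u0 f_ne by simp
qed

lemma before_Tex: "0 \<le> t \<Longrightarrow> t < extinction_time u \<Longrightarrow> u t \<noteq> 0"
proof
  assume t: "0 \<le> t" "t < extinction_time u" and ut: "u t = 0"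
  show False
  proof (cases "t = 0")
    case True thus False using ut u0 f_ne by simp
  next
    case False
    hence "t \<in> Sx" using t ut norm_mono[of t] by (auto simp: Sx_def)
    hence "Inf Sx \<le> t" by (rule cInf_lower[OF _ Sx_bdd])
    thus False using t by (simp add: extinction_time_def Sx_def)
  qed
qed

end

context gfm begin

lemma key:
  assumes \<tau>0: "0 < \<tau>" and \<tau>T: "\<tau> < extinction_time u"
  shows "G \<tau> \<le> (2 - p) * p * Rq \<tau> * (extinction_time u - \<tau>)"
proof -
  define T where "T = extinction_time u"
  define c where "c = (2 - p) * p * Rq \<tau>"
  have \<tau>T': "\<tau> \<le> T" using \<tau>T by (simp add: T_def)
  have "(\<lambda>s. - G s - c * s) T \<le> (\<lambda>s. - G s - c * s) \<tau>"
  proof (rule dini_cont[OF \<tau>T'])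
    show "continuous_on {\<tau>..T} (\<lambda>s. - G s - c * s)"
      using G_cont[of \<tau> T] \<tau>0 by (intro continuous_intros) auto
    fix t assume t: "t \<in> {\<tau>..<T}"
    hence t0: "t > 0" and ut: "u t \<noteq> 0" using \<tau>0 before_Tex[of t] by (auto simp: T_def)
    have dc: "((\<lambda>s. c * s) has_real_derivative c * 1) (at t within {t..})"
      by (rule DERIV_cmult[OF DERIV_ident])
    have d: "((\<lambda>s. - G s - c * s) has_real_derivative (- (- (2 - p) * p * Rq t) - c * 1)) (at t within {t..})"
      by (rule DERIV_diff[OF DERIV_minus[OF G_deriv[OF t0 ut]] dc])
    have "Rq t \<le> Rq \<tau>"
    proof (rule Rq_mono[OF \<tau>0])
      show "\<tau> \<le> t" using t by simp
      fix s assume "s \<in> {\<tau>..t}"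
      thus "u s \<noteq> 0" using t \<tau>0 by (intro before_Tex) (auto simp: T_def)
    qed
    hence "(2 - p) * p * Rq t \<le> (2 - p) * p * Rq \<tau>" using p1 p2 by (intro mult_left_mono) auto
    moreover have "- (- (2 - p) * p * Rq t) - c * 1 = (2 - p) * p * Rq t - (2 - p) * p * Rq \<tau>"
      by (simp add: c_def algebra_simps)
    ultimately have "- (- (2 - p) * p * Rq t) - c * 1 \<le> 0" by linarith
    with d show "\<exists>D. ((\<lambda>s. - G s - c * s) has_real_derivative D) (at t within {t..}) \<and> D \<le> 0" by blast
  qed
  moreover have "G T = 0" using u_Tex G_zero by (simp add: T_def)
  ultimately have "G \<tau> \<le> c * (T - \<tau>)" by (simp add: algebra_simps)
  thus ?thesis by (simp add: c_def T_def)
qed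

definition Hf where "Hf s = G s / (extinction_time u - s)"

lemma H_mono:
  assumes s: "0 \<le> s" and st: "s \<le> t" and tT: "t < extinction_time u"
  shows "Hf t \<le> Hf s"
proof (rule dini_cont_open[where \<phi>=Hf, OF st])
  define T where "T = extinction_time u"
  show "continuous_on {s..t} Hf"
    unfolding Hf_def[abs_def] using G_cont[of s t] s tT by (intro continuous_intros) auto
  fix \<sigma> assume \<sigma>: "\<sigma> \<in> {s<..<t}"
  hence \<sigma>0: "\<sigma> > 0" and u\<sigma>: "u \<sigma> \<noteq> 0" and \<sigma>T: "\<sigma> < T" using s tT before_Tex[of \<sigma>] by (auto simp: T_def)
  have dT: "((\<lambda>x. T - x) has_real_derivative (0 - 1)) (at \<sigma> within {\<sigma>..})"
    by (rule DERIV_diff[OF DERIV_const DERIV_ident])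
  have d: "(Hf has_real_derivative ((- (2 - p) * p * Rq \<sigma>) * (T - \<sigma>) - G \<sigma> * (0 - 1)) / ((T - \<sigma>) * (T - \<sigma>))) (at \<sigma> within {\<sigma>..})"
    unfolding Hf_def[abs_def] T_def[symmetric]
    by (rule DERIV_divide[OF G_deriv[OF \<sigma>0 u\<sigma>] dT]) (use \<sigma>T in simp)
  have "G \<sigma> \<le> (2 - p) * p * Rq \<sigma> * (T - \<sigma>)" using key[OF \<sigma>0] \<sigma>T by (simp add: T_def)
  moreover have "(- (2 - p) * p * Rq \<sigma>) * (T - \<sigma>) - G \<sigma> * (0 - 1) = G \<sigma> - (2 - p) * p * Rq \<sigma> * (T - \<sigma>)"
    by (simp add: algebra_simps)
  ultimately have "(- (2 - p) * p * Rq \<sigma>) * (T - \<sigma>) - G \<sigma> * (0 - 1) \<le> 0" by linarith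
  moreover have "(T - \<sigma>) * (T - \<sigma>) > 0" using \<sigma>T by simp
  ultimately have "((- (2 - p) * p * Rq \<sigma>) * (T - \<sigma>) - G \<sigma> * (0 - 1)) / ((T - \<sigma>) * (T - \<sigma>)) \<le> 0"
    by (rule divide_nonpos_pos)
  with d show "\<exists>D. (Hf has_real_derivative D) (at \<sigma> within {\<sigma>..}) \<and> D \<le> 0" by blast
qed

lemma w_eq:
  assumes t: "0 \<le> t" and tT: "t < extinction_time u"
  shows "norm ((1 / (1 - (2 - p) * (1 / ((2 - p) * extinction_time u)) * t) powr (1 / (2 - p))) *\<^sub>R u t)
    = (extinction_time u * Hf t) powr (1 / (2 - p))"
proof -
  define T where "T = extinction_time u"
  define q where "q = 1 / (2 - p)"
  define B where "B = 1 - (2 - p) * (1 / ((2 - p) * T)) * t"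
  have T0: "T > 0" using Tex_pos by (simp add: T_def)
  have p2': "2 - p > 0" using p2 by simp
  have B: "B = (T - t) / T" using T0 p2' by (simp add: B_def field_simps)
  have Bpos: "B > 0" using B T0 tT by (simp add: T_def)
  have ut: "u t \<noteq> 0" using before_Tex[OF t tT] .
  have "G t = norm (u t) powr (2 * ((2 - p) / 2))" unfolding G_def by (rule N_powr[OF ut])
  also have "2 * ((2 - p) / 2) = 2 - p" by simp
  finally have Gt: "G t = norm (u t) powr (2 - p)" .
  have "T * Hf t = T * G t / (T - t)" by (simp add: Hf_def T_def)
  also have "\<dots> = G t / B" unfolding B by (simp add: divide_divide_eq_right mult.commute)
  finally have "T * Hf t = G t / B" .
  hence "(T * Hf t) powr q = G t powr q / B powr q" by (simp add: powr_divide)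
  also have "G t powr q = norm (u t)" using p2' ut by (simp add: Gt powr_powr q_def)
  finally have "(T * Hf t) powr q = norm (u t) / B powr q" .
  moreover have "norm ((1 / B powr q) *\<^sub>R u t) = norm (u t) / B powr q" using Bpos by simp
  ultimately show ?thesis by (simp add: B_def q_def T_def)
qed

lemma main:
  "let Tex = extinction_time u;
       lam = 1 / ((2 - p) * Tex);
       a = (\<lambda>t. (1 - (2 - p) * lam * t) powr (1 / (2 - p)));
       w = (\<lambda>t. (1 / a t) *\<^sub>R u t)
   in \<forall>s t. 0 \<le> s \<and> s \<le> t \<and> t < Tex \<longrightarrow> norm (w t) \<le> norm (w s)"
  unfolding Let_def
proof (intro allI impI)
  fix s t assume h: "0 \<le> s \<and> s \<le> t \<and> t < extinction_time u"
  have sT: "s < extinction_time u" using h by simp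
  have T0: "extinction_time u > 0" by (rule Tex_pos)
  have Hn: "0 \<le> Hf t" using G_nonneg[of t] h by (simp add: Hf_def)
  have "(extinction_time u * Hf t) powr (1 / (2 - p)) \<le> (extinction_time u * Hf s) powr (1 / (2 - p))"
    by (rule powr_mono2) (use p2 T0 Hn H_mono[of s t] h in \<open>auto intro: mult_left_mono\<close>)
  thus "norm ((1 / (1 - (2 - p) * (1 / ((2 - p) * extinction_time u)) * t) powr (1 / (2 - p))) *\<^sub>R u t)
        \<le> norm ((1 / (1 - (2 - p) * (1 / ((2 - p) * extinction_time u)) * s) powr (1 / (2 - p))) *\<^sub>R u s)"
    using w_eq[of t] w_eq[of s] h sT by simp
qed

end

theorem lemma3:
  fixes J :: "'a::{real_inner, complete_space} \<Rightarrow> ereal"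
    and p :: real and f :: 'a and u :: "real \<Rightarrow> 'a"
  assumes "convex_fun J" and "lsc_fun J" and "proper_fun J" and "dense_domain J"
    and "abs_homogeneous p J"
    and "lambda1 p J > 0"
    and "1 \<le> p" and "p < 2"
    and "f \<in> H0 J"
    and "gradient_flow J f u"
  shows "let Tex = extinction_time u;
             lam = 1 / ((2 - p) * Tex);
             a = (\<lambda>t. (1 - (2 - p) * lam * t) powr (1 / (2 - p)));
             w = (\<lambda>t. (1 / a t) *\<^sub>R u t)
         in \<forall>s t. 0 \<le> s \<and> s \<le> t \<and> t < Tex \<longrightarrow> norm (w t) \<le> norm (w s)"
proof -
  have gfd: "continuous_on {0..} u" "u 0 = f"
    "\<forall>t>0. \<exists>z. min_norm_elem (subdiff J (u t)) z \<and> (u has_vector_derivative (- z)) (at t within {t..})"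
    using assms(10) unfolding gradient_flow_def by blast+
  obtain \<zeta> where \<zeta>: "\<And>t. t > 0 \<Longrightarrow> min_norm_elem (subdiff J (u t)) (\<zeta> t) \<and> (u has_vector_derivative (- \<zeta> t)) (at t within {t..})"
    using gfd(3) by metis
  interpret gfm J p u \<zeta> f
  proof (unfold_locales)
    show "convex_fun J" by fact
    show "proper_fun J" by fact
    show "abs_homogeneous p J" by fact
    show "1 \<le> p" by fact
    show "p < 2" by fact
    show "lsc_fun J" by fact
    show "continuous_on {0..} u" by (rule gfd(1))
    show "\<And>t. t > 0 \<Longrightarrow> min_norm_elem (subdiff J (u t)) (\<zeta> t)" using \<zeta> by blast
    show "\<And>t. t > 0 \<Longrightarrow> (u has_vector_derivative - \<zeta> t) (at t within {t..})" using \<zeta> by blast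
    show "u 0 = f" by (rule gfd(2))
    show "f \<in> H0 J" by fact
    show "lambda1 p J > 0" by fact
  qed
  show ?thesis by (rule main)
qed

end
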